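(* The sets $G(z^* )$ and $-G(z^* )=\{-u: u\in G(z^* )\}$ are disjoint, and the following three sets coincide: (i) $G(z^* )\cup(-G(z^* ))$; (ii) the orbit of $z^*$ under $\mathrm{Aut}_{\mathbb Z}(L^* )$; (iii) the orbit of $z^*$ under $\mathrm{AAut}_{\mathbb Z}(L^* )=\mathrm{Isom}_{\mathbb Z}(L^* )$.
   Context: $\mathbb F$ is a field of characteristic zero, $\mathfrak{sl}_2$ the Lie algebra of $2\times2$ trace-zero matrices over $\mathbb F$ with trace form $(u,v)=\mathrm{tr}(uv)$. Let $x^*=\begin{pmatrix}1&-1\\1&-1\end{pmatrix}$, $y^*=\begin{pmatrix}0&0\\1&0\end{pmatrix}$, $z^*=\begin{pmatrix}0&-1\\0&0\end{pmatrix}$, $L^*=\mathbb Zx^*\oplus\mathbb Zy^*\oplus\mathbb Zz^*$. $G$ is the subgroup of $\mathrm{Aut}_{\mathbb F}(\mathfrak{sl}_2)$ generated by $\exp(\mathrm{ad}\,x^* ),\exp(\mathrm{ad}\,y^* ),\exp(\mathrm{ad}\,z^* )$. An antiautomorphism is an $\mathbb F$-linear bijection $\phi$ with $\phi([u,v])=[\phi(v),\phi(u)]$; an isometry is an $\mathbb F$-linear bijection preserving the trace form. $\mathrm{Aut}_{\mathbb Z}(L^* )$, $\mathrm{AAut}_{\mathbb Z}(L^* )$, $\mathrm{Isom}_{\mathbb Z}(L^* )$ are respectively the groups of automorphisms, of automorphisms and antiautomorphisms, and of isometries $\varphi$ of $\mathfrak{sl}_2$ with $\varphi(L^* )=L^*$.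 *)

theory Defs
  imports "HOL-Analysis.Analysis"
begin

type_synonym 'a m2 = "'a^2^2"

definition mk2 :: "'a \<Rightarrow> 'a \<Rightarrow> 'a \<Rightarrow> 'a \<Rightarrow> 'a m2" where
  "mk2 a b c d = (\<chi> i j. if i = 1 then (if j = 1 then a else b) else (if j = 1 then c else d))"

definition mtr :: "'a::semiring_1 m2 \<Rightarrow> 'a" where
  "mtr A = A$1$1 + A$2$2"

definition msmul :: "'a::semiring_1 \<Rightarrow> 'a m2 \<Rightarrow> 'a m2" where
  "msmul c A = (\<chi> i j. c * A$i$j)"

definition sl2 :: "'a::field_char_0 m2 set" where
  "sl2 = {A. mtr A = 0}"

definition lie :: "'a::field_char_0 m2 \<Rightarrow> 'a m2 \<Rightarrow> 'a m2" where
  "lie u v = u ** v - v ** u"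

definition trform :: "'a::field_char_0 m2 \<Rightarrow> 'a m2 \<Rightarrow> 'a" where
  "trform u v = mtr (u ** v)"

definition ad :: "'a::field_char_0 m2 \<Rightarrow> 'a m2 \<Rightarrow> 'a m2" where
  "ad u = lie u"

text \<open>exp of a nilpotent endomorphism of sl_2: ad u is nilpotent with (ad u)^3 = 0
  for each of the nilpotent generators below, so the exponential series is this finite sum.\<close>
definition exp_ad :: "'a::field_char_0 m2 \<Rightarrow> 'a m2 \<Rightarrow> 'a m2" where
  "exp_ad u v = (\<Sum>k<3. msmul (1 / fact k) ((ad u ^^ k) v))"

definition xs :: "'a::field_char_0 m2" where "xs = mk2 1 (-1) 1 (-1)"
definition ys :: "'a::field_char_0 m2" where "ys = mk2 0 0 1 0"
definition zs :: "'a::field_char_0 m2" where "zs = mk2 0 (-1) 0 0"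

definition Lstar :: "'a::field_char_0 m2 set" where
  "Lstar = {msmul (of_int a) xs + msmul (of_int b) ys + msmul (of_int c) zs | a b c. True}"

definition lin_bij :: "('a::field_char_0 m2 \<Rightarrow> 'a m2) \<Rightarrow> bool" where
  "lin_bij f \<longleftrightarrow> bij_betw f sl2 sl2 \<and>
     (\<forall>u\<in>sl2. \<forall>v\<in>sl2. f (u + v) = f u + f v) \<and>
     (\<forall>c. \<forall>u\<in>sl2. f (msmul c u) = msmul c (f u))"

definition is_aut :: "('a::field_char_0 m2 \<Rightarrow> 'a m2) \<Rightarrow> bool" where
  "is_aut f \<longleftrightarrow> lin_bij f \<and> (\<forall>u\<in>sl2. \<forall>v\<in>sl2. f (lie u v) = lie (f u) (f v))"

definition is_antiaut :: "('a::field_char_0 m2 \<Rightarrow> 'a m2) \<Rightarrow> bool" where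
  "is_antiaut f \<longleftrightarrow> lin_bij f \<and> (\<forall>u\<in>sl2. \<forall>v\<in>sl2. f (lie u v) = lie (f v) (f u))"

definition is_isom :: "('a::field_char_0 m2 \<Rightarrow> 'a m2) \<Rightarrow> bool" where
  "is_isom f \<longleftrightarrow> lin_bij f \<and> (\<forall>u\<in>sl2. \<forall>v\<in>sl2. trform (f u) (f v) = trform u v)"

definition AutZ :: "('a::field_char_0 m2 \<Rightarrow> 'a m2) set" where
  "AutZ = {f. is_aut f \<and> f ` Lstar = Lstar}"

definition AAutZ :: "('a::field_char_0 m2 \<Rightarrow> 'a m2) set" where
  "AAutZ = {f. (is_aut f \<or> is_antiaut f) \<and> f ` Lstar = Lstar}"

definition IsomZ :: "('a::field_char_0 m2 \<Rightarrow> 'a m2) set" where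
  "IsomZ = {f. is_isom f \<and> f ` Lstar = Lstar}"

text \<open>The subgroup G of Aut(sl_2) generated by the three exponentials
  (maps are only relevant on sl_2; inverses are taken on sl_2).\<close>
definition gens :: "('a::field_char_0 m2 \<Rightarrow> 'a m2) set" where
  "gens = {exp_ad xs, exp_ad ys, exp_ad zs}"

inductive_set Ggrp :: "('a::field_char_0 m2 \<Rightarrow> 'a m2) set" where
  Gid: "id \<in> Ggrp"
| Gmul: "g \<in> Ggrp \<Longrightarrow> s \<in> gens \<Longrightarrow> s \<circ> g \<in> Ggrp"
| Ginv: "g \<in> Ggrp \<Longrightarrow> s \<in> gens \<Longrightarrow> inv_into sl2 s \<circ> g \<in> Ggrp"

definition orbit :: "('a m2 \<Rightarrow> 'a m2) set \<Rightarrow> 'a m2 \<Rightarrow> 'a m2 set" where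
  "orbit H u = (\<lambda>g. g u) ` H"

end

theory Submission
  imports Defs
begin

lemma mk2_nth[simp]:
  "mk2 a b c d $ 1 $ 1 = a" "mk2 a b c d $ 1 $ 2 = b"
  "mk2 a b c d $ 2 $ 1 = c" "mk2 a b c d $ 2 $ 2 = d"
  by (simp_all add: mk2_def)

lemma m2_eq_iff: "(A::'a m2) = B \<longleftrightarrow> A$1$1 = B$1$1 \<and> A$1$2 = B$1$2 \<and> A$2$1 = B$2$1 \<and> A$2$2 = B$2$2"
  by (auto simp: vec_eq_iff forall_2)

lemma m2_cases: "(A::'a m2) = mk2 (A$1$1) (A$1$2) (A$2$1) (A$2$2)"
  by (simp add: m2_eq_iff)

lemma mk2_eq[simp]: "mk2 a b c d = mk2 a' b' c' d' \<longleftrightarrow> a = a' \<and> b = b' \<and> c = c' \<and> d = d'"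
  by (simp add: m2_eq_iff)

lemma mk2_mult[simp]: "mk2 a b c d ** mk2 e f g h =
  mk2 (a*e+b*g) (a*f+b*h) (c*e+d*g) (c*f+d*h)"
  by (simp add: m2_eq_iff matrix_matrix_mult_def sum_2)

lemma mk2_add[simp]: "mk2 a b c d + mk2 e f g h = mk2 (a+e) (b+f) (c+g) (d+h)"
  by (simp add: m2_eq_iff)
lemma mk2_diff[simp]: "mk2 a b c d - mk2 e f g h = mk2 (a-e) (b-f) (c-g) (d-h)"
  by (simp add: m2_eq_iff)
lemma mk2_uminus[simp]: "- mk2 a b c d = mk2 (-a) (-b) (-c) (-d)"
  by (simp add: m2_eq_iff)
lemma mk2_zero: "0 = mk2 0 0 0 0"
  by (simp add: m2_eq_iff)
lemma msmul_mk2[simp]: "msmul k (mk2 a b c d) = mk2 (k*a) (k*b) (k*c) (k*d)"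
  by (simp add: m2_eq_iff msmul_def)
lemma mtr_mk2[simp]: "mtr (mk2 a b c d) = a + d"
  by (simp add: mtr_def)

lemma exp_ad_eq: "exp_ad u v = v + lie u v + msmul (1/2) (lie u (lie u v))"
proof -
  have "msmul 1 v = v" for v :: "'a m2" by (simp add: msmul_def vec_eq_iff)
  then show ?thesis by (simp add: exp_ad_def eval_nat_numeral lessThan_Suc ad_def)
qed

lemma sl2_mk2: "(u::'a::field_char_0 m2) \<in> sl2 \<longleftrightarrow> (\<exists>p q r. u = mk2 p q r (-p))"
proof
  assume "u \<in> sl2"
  then have "u$2$2 = - u$1$1" by (simp add: sl2_def mtr_def eq_neg_iff_add_eq_0 add.commute)
  then show "\<exists>p q r. u = mk2 p q r (-p)" by (metis m2_cases)
qed (auto simp: sl2_def)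


definition nmat :: "int \<Rightarrow> int \<Rightarrow> 'a::field_char_0 m2" where
 "nmat a c = mk2 (of_int (a*c)) (of_int (-(a^2))) (of_int (c^2)) (of_int (-(a*c)))"

lemma nmat_sl2: "nmat a c \<in> sl2"
  by (simp add: nmat_def sl2_def)

lemma zs_nmat: "zs = nmat 1 0"
  by (simp add: nmat_def zs_def)

lemma nmat_neg: "nmat (-a) (-c) = nmat a c"
  by (simp add: nmat_def)

lemma exp_ad_ys: "exp_ad ys (nmat a c) = nmat a (a+c)"
  by (simp add: nmat_def ys_def exp_ad_eq lie_def algebra_simps power2_eq_square)
lemma exp_ad_ys': "exp_ad (-ys) (nmat a c) = nmat a (c-a)"
  by (simp add: nmat_def ys_def exp_ad_eq lie_def algebra_simps power2_eq_square)
lemma exp_ad_zs: "exp_ad zs (nmat a c) = nmat (a-c) c"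
  by (simp add: nmat_def zs_def exp_ad_eq lie_def algebra_simps power2_eq_square)
lemma exp_ad_zs': "exp_ad (-zs) (nmat a c) = nmat (a+c) c"
  by (simp add: nmat_def zs_def exp_ad_eq lie_def algebra_simps power2_eq_square)
lemma exp_ad_xs: "exp_ad xs (nmat a c) = nmat (2*a-c) a"
  by (simp add: nmat_def xs_def exp_ad_eq lie_def algebra_simps power2_eq_square)
lemma exp_ad_xs': "exp_ad (-xs) (nmat a c) = nmat c (2*c-a)"
  by (simp add: nmat_def xs_def exp_ad_eq lie_def algebra_simps power2_eq_square)

lemma exp_ad_inv:
  assumes "x \<in> {xs, ys, zs}"
  shows "exp_ad (-x) (exp_ad x v) = (v::'a::field_char_0 m2)"
  using assms
  apply (subst (1 2) m2_cases[of v])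
  by (auto simp: xs_def ys_def zs_def exp_ad_eq lie_def algebra_simps)

lemma exp_ad_inv2:
  assumes "x \<in> {xs, ys, zs}"
  shows "exp_ad x (exp_ad (-x) v) = (v::'a::field_char_0 m2)"
  using assms
  apply (subst (1 2) m2_cases[of v])
  by (auto simp: xs_def ys_def zs_def exp_ad_eq lie_def algebra_simps)


lemma inv_gen:
  assumes "x \<in> {xs, ys, zs}" "exp_ad (-x) y \<in> sl2"
  shows "inv_into sl2 (exp_ad x) y = exp_ad (-x) (y::'a::field_char_0 m2)"
proof (rule inv_into_f_eq)
  show "inj_on (exp_ad x) sl2"
    by (rule inj_on_inverseI[where g="exp_ad (-x)"]) (use exp_ad_inv[OF assms(1)] in auto)
qed (use assms exp_ad_inv2[OF assms(1)] in auto)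

definition Nset :: "'a::field_char_0 m2 set" where
  "Nset = {nmat a c | a c. coprime a c}"


lemma coprime_bez: "coprime (a::int) c \<longleftrightarrow> (\<exists>u v. u * a + v * c = 1)"
proof
  assume "coprime a c"
  then show "\<exists>u v. u * a + v * c = 1" using bezout_int[of a c] by simp
next
  assume "\<exists>u v. u * a + v * c = 1"
  then obtain u v where h: "u * a + v * c = 1" by blast
  show "coprime a c"
  proof (rule coprimeI)
    fix d assume "d dvd a" "d dvd c"
    then have "d dvd u * a + v * c" by simp
    then show "is_unit d" using h by simp
  qed
qed


lemma cop1: "coprime (a::int) c \<Longrightarrow> coprime a (a+c)"
  unfolding coprime_bez
proof (elim exE)
  fix u v assume "u * a + v * c = 1"
  then have "(u - v) * a + v * (a + c) = 1" by (simp add: algebra_simps)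
  then show "\<exists>u v. u * a + v * (a + c) = 1" by blast
qed
lemma cop2: "coprime (a::int) c \<Longrightarrow> coprime a (c-a)"
  unfolding coprime_bez
proof (elim exE)
  fix u v assume "u * a + v * c = 1"
  then have "(u + v) * a + v * (c - a) = 1" by (simp add: algebra_simps)
  then show "\<exists>u v. u * a + v * (c - a) = 1" by blast
qed
lemma cop3: "coprime (a::int) c \<Longrightarrow> coprime (a-c) c"
  unfolding coprime_bez
proof (elim exE)
  fix u v assume "u * a + v * c = 1"
  then have "u * (a - c) + (v + u) * c = 1" by (simp add: algebra_simps)
  then show "\<exists>u v. u * (a - c) + v * c = 1" by blast
qed
lemma cop4: "coprime (a::int) c \<Longrightarrow> coprime (a+c) c"
  unfolding coprime_bez
proof (elim exE)
  fix u v assume "u * a + v * c = 1"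
  then have "u * (a + c) + (v - u) * c = 1" by (simp add: algebra_simps)
  then show "\<exists>u v. u * (a + c) + v * c = 1" by blast
qed
lemma cop5: "coprime (a::int) c \<Longrightarrow> coprime (2*a-c) a"
  unfolding coprime_bez
proof (elim exE)
  fix u v assume "u * a + v * c = 1"
  then have "(-v) * (2*a - c) + (u + 2 * v) * a = 1" by (simp add: algebra_simps)
  then show "\<exists>u v. u * (2*a - c) + v * a = 1" by blast
qed
lemma cop6: "coprime (a::int) c \<Longrightarrow> coprime c (2*c-a)"
  unfolding coprime_bez
proof (elim exE)
  fix u v assume "u * a + v * c = 1"
  then have "(v + 2 * u) * c + (-u) * (2*c - a) = 1" by (simp add: algebra_simps)
  then show "\<exists>u v. u * c + v * (2*c - a) = 1" by blast
qed


lemma Nset_I: "coprime a c \<Longrightarrow> nmat a c \<in> Nset"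
  unfolding Nset_def by blast

lemma gens_cases: "s \<in> gens \<Longrightarrow> (\<exists>x\<in>{xs,ys,zs}. s = exp_ad x)"
  by (auto simp: gens_def)

lemma G_in_N: "g \<in> Ggrp \<Longrightarrow> g zs \<in> (Nset :: 'a::field_char_0 m2 set)"
proof (induction rule: Ggrp.induct)
  case Gid
  show ?case unfolding Nset_def zs_nmat by (rule CollectI, rule exI[of _ 1], rule exI[of _ 0]) simp
next
  case (Gmul g s)
  then obtain a c where ac: "g zs = nmat a c" "coprime a c" by (auto simp: Nset_def)
  from \<open>s \<in> gens\<close> obtain x where x: "x \<in> {xs,ys,zs}" "s = exp_ad x" by (auto simp: gens_def)
  have "s (g zs) \<in> Nset"
    using x ac by (auto simp: exp_ad_xs exp_ad_ys exp_ad_zs intro!: Nset_I cop1 cop3 cop5)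
  then show ?case by simp
next
  case (Ginv g s)
  then obtain a c where ac: "g zs = nmat a c" "coprime a c" by (auto simp: Nset_def)
  from \<open>s \<in> gens\<close> obtain x where x: "x \<in> {xs,ys,zs}" "s = exp_ad x" by (auto simp: gens_def)
  have "inv_into sl2 s (g zs) = exp_ad (-x) (nmat a c)"
    unfolding ac x(2) 
    by (rule inv_gen[OF x(1)]) (use x(1) in \<open>auto simp: exp_ad_xs' exp_ad_ys' exp_ad_zs' nmat_sl2\<close>)
  moreover have "exp_ad (-x) (nmat a c) \<in> Nset"
    using x(1) ac by (auto simp: exp_ad_xs' exp_ad_ys' exp_ad_zs' intro!: Nset_I cop2 cop4 cop6)
  ultimately show ?case by simp
qed

lemma O_mul: "u \<in> orbit Ggrp zs \<Longrightarrow> x \<in> {xs,ys,zs} \<Longrightarrow> exp_ad x u \<in> orbit Ggrp zs"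
  unfolding orbit_def
proof -
  assume "u \<in> (\<lambda>g. g zs) ` Ggrp" "x \<in> {xs,ys,zs}"
  then obtain g where "g \<in> Ggrp" "u = g zs" by auto
  then have m: "exp_ad x \<circ> g \<in> Ggrp" using \<open>x \<in> _\<close> by (intro Ggrp.Gmul) (auto simp: gens_def)
  show "exp_ad x u \<in> (\<lambda>g. g zs) ` Ggrp" using \<open>u = g zs\<close> by (intro rev_image_eqI[OF m]) auto
qed

lemma O_inv: "u \<in> orbit Ggrp zs \<Longrightarrow> x \<in> {xs,ys,zs} \<Longrightarrow> exp_ad (-x) u \<in> sl2 \<Longrightarrow> exp_ad (-x) u \<in> orbit Ggrp zs"
  unfolding orbit_def
proof -
  assume "u \<in> (\<lambda>g. g zs) ` Ggrp" "x \<in> {xs,ys,zs}" "exp_ad (-x) u \<in> sl2"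
  then obtain g where "g \<in> Ggrp" "u = g zs" by auto
  then have m: "inv_into sl2 (exp_ad x) \<circ> g \<in> Ggrp" using \<open>x \<in> _\<close> by (intro Ggrp.Ginv) (auto simp: gens_def)
  moreover have "inv_into sl2 (exp_ad x) u = exp_ad (-x) u" by (rule inv_gen) fact+
  ultimately show "exp_ad (-x) u \<in> (\<lambda>g. g zs) ` Ggrp" using \<open>u = g zs\<close> by (intro rev_image_eqI[OF m]) auto
qed

lemma N_in_G: "coprime a c \<Longrightarrow> (nmat a c :: 'a::field_char_0 m2) \<in> orbit Ggrp zs"
proof (induction "nat (\<bar>a\<bar> + \<bar>c\<bar>)" arbitrary: a c rule: less_induct)
  case less
  let ?O = "orbit Ggrp zs :: 'a m2 set"
  have z: "(nmat 1 0 :: 'a m2) \<in> ?O"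
    unfolding zs_nmat[symmetric] orbit_def by (intro rev_image_eqI[OF Ggrp.Gid]) auto
  have Y: "nmat a' (a'+c') \<in> ?O" if "nmat a' c' \<in> ?O" for a' c'
    using O_mul[OF that, of ys] by (simp add: exp_ad_ys)
  have Z: "nmat (a'-c') c' \<in> ?O" if "nmat a' c' \<in> ?O" for a' c'
    using O_mul[OF that, of zs] by (simp add: exp_ad_zs)
  have Y': "nmat a' (c'-a') \<in> ?O" if "nmat a' c' \<in> ?O" for a' c'
    using O_inv[OF that, of ys] by (simp add: exp_ad_ys' nmat_sl2)
  have Z': "nmat (a'+c') c' \<in> ?O" if "nmat a' c' \<in> ?O" for a' c'
    using O_inv[OF that, of zs] by (simp add: exp_ad_zs' nmat_sl2)
  show ?case
  proof (cases "c = 0")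
    case True
    then have "a = 1 \<or> a = -1" using less.prems by auto
    moreover have "(nmat (-1) 0 :: 'a m2) = nmat 1 0" by (simp add: nmat_def)
    ultimately show ?thesis using z True by auto
  next
    case c0: False
    show ?thesis
    proof (cases "a = 0")
      case True
      then have "c = 1 \<or> c = -1" using less.prems by auto
      moreover have "nmat 0 1 \<in> ?O" using Z[OF Y[OF z]] by simp
      moreover have "(nmat 0 (-1) :: 'a m2) = nmat 0 1" by (simp add: nmat_def)
      ultimately show ?thesis using True by auto
    next
      case a0: False
      have "\<bar>a-c\<bar> < \<bar>a\<bar> \<or> \<bar>a+c\<bar> < \<bar>a\<bar> \<or> \<bar>c-a\<bar> < \<bar>c\<bar> \<or> \<bar>c+a\<bar> < \<bar>c\<bar>"
        using a0 c0 by (auto simp: abs_if)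
      then show ?thesis
      proof (elim disjE)
        assume h: "\<bar>a-c\<bar> < \<bar>a\<bar>"
        have "nmat (a-c) c \<in> ?O" using less.hyps[of "a-c" c] h less.prems cop3 by auto
        then show ?thesis using Z'[of "a-c" c] by simp
      next
        assume h: "\<bar>a+c\<bar> < \<bar>a\<bar>"
        have "nmat (a+c) c \<in> ?O" using less.hyps[of "a+c" c] h less.prems cop4 by auto
        then show ?thesis using Z[of "a+c" c] by simp
      next
        assume h: "\<bar>c-a\<bar> < \<bar>c\<bar>"
        have "nmat a (c-a) \<in> ?O" using less.hyps[of a "c-a"] h less.prems cop2 by auto
        then show ?thesis using Y[of a "c-a"] by simp
      next
        assume h: "\<bar>c+a\<bar> < \<bar>c\<bar>"
        have "nmat a (a+c) \<in> ?O" using less.hyps[of a "a+c"] h less.prems cop1 by (auto simp: add.commute)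
        then show ?thesis using Y'[of a "a+c"] by simp
      qed
    qed
  qed
qed


lemma NT:
  fixes p q r :: int
  assumes eq: "p^2 + q*r = 0" and prim: "\<forall>d. d dvd p \<longrightarrow> d dvd q \<longrightarrow> d dvd r \<longrightarrow> d dvd 1"
  shows "\<exists>a c. coprime a c \<and> ((p = a*c \<and> q = -(a^2) \<and> r = c^2) \<or> (p = -(a*c) \<and> q = a^2 \<and> r = -(c^2)))"
proof -
  have qr: "q*r = -(p^2)" using eq by simp
  have co: "coprime q r"
  proof -
    let ?g = "gcd q r"
    have "?g^2 dvd q*r" unfolding power2_eq_square by (rule mult_dvd_mono) auto
    then have "?g^2 dvd p^2" unfolding qr by simp
    then have "?g dvd p" by simp
    then have "?g dvd 1" using prim by auto
    then show ?thesis by (simp add: coprime_iff_gcd_eq_1)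
  qed
  define a where "a = gcd p q"
  define c where "c = gcd p r"
  have a2: "a^2 = \<bar>q\<bar>"
  proof -
    have "a^2 = gcd (p^2) (q^2)" by (simp add: a_def)
    also have "p^2 = q * (-r)" using qr by simp
    also have "q^2 = q * q" by (simp add: power2_eq_square)
    also have "gcd (q * (-r)) (q * q) = \<bar>q * gcd (-r) q\<bar>" by (simp add: gcd_mult_left)
    also have "gcd (-r) q = 1" using co by (simp add: coprime_iff_gcd_eq_1 gcd.commute)
    finally show ?thesis by simp
  qed
  have c2: "c^2 = \<bar>r\<bar>"
  proof -
    have "c^2 = gcd (p^2) (r^2)" by (simp add: c_def)
    also have "p^2 = r * (-q)" using qr by (simp add: mult.commute)
    also have "r^2 = r * r" by (simp add: power2_eq_square)
    also have "gcd (r * (-q)) (r * r) = \<bar>r * gcd (-q) r\<bar>" by (simp add: gcd_mult_left)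
    also have "gcd (-q) r = 1" using co by (simp add: coprime_iff_gcd_eq_1)
    finally show ?thesis by simp
  qed
  have cac: "coprime a c"
    by (rule coprime_divisors[OF _ _ co]) (simp_all add: a_def c_def)
  have sgn: "q \<le> 0 \<and> r \<ge> 0 \<or> q \<ge> 0 \<and> r \<le> 0"
    using qr by (smt (verit) mult_pos_pos mult_neg_neg zero_le_power2)
  have "p^2 = (a*c)^2"
    using qr a2 c2 sgn by (auto simp: power_mult_distrib abs_if)
  then have pac: "p = a*c \<or> p = -(a*c)" by (simp add: power2_eq_iff)
  from sgn show ?thesis
  proof (elim disjE conjE)
    assume "q \<le> 0" "r \<ge> 0"
    then have "q = -(a^2)" "r = c^2" using a2 c2 by auto
    then show ?thesis using pac cac
      by (metis coprime_minus_left_iff mult_minus_left power2_eq_iff)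
  next
    assume "q \<ge> 0" "r \<le> 0"
    then have "q = a^2" "r = -(c^2)" using a2 c2 by auto
    then show ?thesis using pac cac
      by (metis coprime_minus_left_iff mult_minus_left power2_eq_iff)
  qed
qed


definition imat :: "int \<Rightarrow> int \<Rightarrow> int \<Rightarrow> 'a::field_char_0 m2" where
  "imat p q r = mk2 (of_int p) (of_int q) (of_int r) (of_int (-p))"

lemma Lstar_iff: "u \<in> Lstar \<longleftrightarrow> (\<exists>p q r. u = imat p q r)"
proof
  assume "u \<in> Lstar"
  then obtain a b c where "u = msmul (of_int a) xs + msmul (of_int b) ys + msmul (of_int c) zs"
    unfolding Lstar_def by blast
  then have "u = imat a (-a-c) (a+b)" by (simp add: imat_def xs_def ys_def zs_def)
  then show "\<exists>p q r. u = imat p q r" by blast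
next
  assume "\<exists>p q r. u = imat p q r"
  then obtain p q r where u: "u = imat p q r" by blast
  have "u = msmul (of_int p) xs + msmul (of_int (r-p)) ys + msmul (of_int (-p-q)) zs"
    by (simp add: u imat_def xs_def ys_def zs_def)
  then show "u \<in> Lstar" unfolding Lstar_def by blast
qed

lemma imat_sl2: "imat p q r \<in> sl2"
  by (simp add: imat_def sl2_def)

lemma Lstar_sl2: "u \<in> Lstar \<Longrightarrow> u \<in> sl2"
  unfolding Lstar_iff using imat_sl2 by blast

lemma zs_imat: "zs = imat 0 (-1) 0"
  by (simp add: imat_def zs_def)

lemma zs_Lstar: "zs \<in> Lstar"
  using Lstar_iff zs_imat by blast

lemma zs_sl2: "zs \<in> sl2"
  using Lstar_sl2 zs_Lstar by blast

lemma msmul_sl2: "u \<in> sl2 \<Longrightarrow> msmul k u \<in> sl2"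
  unfolding sl2_mk2 by auto

lemma lin_bij_zero: "lin_bij f \<Longrightarrow> f 0 = 0"
proof -
  assume "lin_bij f"
  moreover have "(0::'a::field_char_0 m2) \<in> sl2" by (simp add: sl2_def mtr_def)
  ultimately have "f (msmul 0 0) = msmul 0 (f 0)" unfolding lin_bij_def by blast
  moreover have "msmul 0 (v::'a m2) = 0" for v by (simp add: msmul_def vec_eq_iff)
  ultimately show "f 0 = 0" by simp
qed

lemma prim:
  assumes lb: "lin_bij f" and L: "f ` Lstar = Lstar" and fz: "f zs = imat p q r"
  shows "\<forall>d. d dvd p \<longrightarrow> d dvd q \<longrightarrow> d dvd r \<longrightarrow> d dvd 1"
proof (intro allI impI)
  fix d assume dp: "d dvd p" and dq: "d dvd q" and dr: "d dvd r"
  have inj: "inj_on f sl2" using lb unfolding lin_bij_def bij_betw_def by blast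
  show "d dvd 1"
  proof (cases "d = 0")
    case True
    then have "f zs = 0" using fz dp dq dr by (simp add: imat_def mk2_zero)
    also have "\<dots> = f 0" using lin_bij_zero[OF lb] by simp
    moreover have z0: "(0::'a m2) \<in> sl2" by (simp add: sl2_def mtr_def)
    ultimately have "zs = (0::'a m2)" using inj_onD[OF inj _ zs_sl2 z0] by simp
    then show ?thesis by (simp add: zs_def mk2_zero)
  next
    case False
    obtain p' q' r' where p': "p = d * p'" "q = d * q'" "r = d * r'" using dp dq dr by (auto elim!: dvdE)
    have "imat p' q' r' \<in> Lstar" using Lstar_iff by blast
    then obtain w where w: "w \<in> Lstar" "f w = imat p' q' r'" using L by (metis imageE)
    have wsl: "w \<in> sl2" using w Lstar_sl2 by blast
    have "f (msmul (of_int d) w) = msmul (of_int d) (f w)" using lb wsl unfolding lin_bij_def by blast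
    also have "\<dots> = f zs" using fz p' w(2) by (simp add: imat_def)
    finally have "msmul (of_int d) w = zs"
      using inj_onD[OF inj _ msmul_sl2[OF wsl] zs_sl2] by blast
    moreover obtain p'' q'' r'' where "w = imat p'' q'' r''" using w Lstar_iff by blast
    ultimately have "of_int (d * q'') = (-1 :: 'a)" by (simp add: imat_def zs_def)
    then have "d * q'' = -1" by (metis of_int_eq_iff of_int_minus of_int_1)
    then show ?thesis by (metis dvd_minus_iff dvd_triv_left)
  qed
qed


lemma trform_lie0: "trform (lie w u) u = 0"
proof -
  have "trform (lie (mk2 a b c d) (mk2 e f g h)) (mk2 e f g h) = (0::'a)" for a b c d e f g h :: 'a
    by (simp add: trform_def lie_def algebra_simps)
  then show ?thesis by (metis m2_cases)
qed

lemma trform_lie0': "trform (lie u w) u = 0"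
proof -
  have "trform (lie (mk2 e f g h) (mk2 a b c d)) (mk2 e f g h) = (0::'a)" for a b c d e f g h :: 'a
    by (simp add: trform_def lie_def algebra_simps)
  then show ?thesis by (metis m2_cases)
qed

lemma trform_smul: "trform (msmul k u) v = k * trform u v"
proof -
  have "trform (msmul k (mk2 e f g h)) (mk2 a b c d) = k * trform (mk2 e f g h) (mk2 a b c d)" for a b c d e f g h :: 'a
    by (simp add: trform_def algebra_simps)
  then show ?thesis by (metis m2_cases)
qed

definition hs :: "'a::field_char_0 m2" where "hs = mk2 1 0 0 (-1)"

lemma hs_sl2: "hs \<in> sl2" by (simp add: hs_def sl2_def)
lemma lie_hs: "lie hs zs = msmul 2 zs" by (simp add: hs_def zs_def lie_def)

lemma trform_imat: "trform (imat p q r) (imat p q r) = (of_int (2*(p^2 + q*r)) :: 'a::field_char_0)"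
  by (simp add: imat_def trform_def algebra_simps power2_eq_square)

lemma orbit_sub:
  assumes f: "(f :: 'a::field_char_0 m2 \<Rightarrow> 'a m2) \<in> AutZ \<union> AAutZ \<union> IsomZ"
  shows "f zs \<in> Nset \<union> uminus ` Nset"
proof -
  have lb: "lin_bij f" and L: "f ` Lstar = Lstar"
    using f unfolding AutZ_def AAutZ_def IsomZ_def is_aut_def is_antiaut_def is_isom_def by auto
  have sm: "f (msmul 2 zs) = msmul 2 (f zs)" using lb zs_sl2 unfolding lin_bij_def by blast
  have tr: "trform (f zs) (f zs) = 0"
  proof -
    consider "is_aut f" | "is_antiaut f" | "is_isom f"
      using f unfolding AutZ_def AAutZ_def IsomZ_def by auto
    then show ?thesis
    proof cases
      case 1
      then have "f (lie hs zs) = lie (f hs) (f zs)" using hs_sl2 zs_sl2 unfolding is_aut_def by blast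
      then have "lie (f hs) (f zs) = msmul 2 (f zs)" using sm lie_hs by metis
      then have "trform (msmul 2 (f zs)) (f zs) = 0" using trform_lie0 by metis
      then show ?thesis by (simp add: trform_smul)
    next
      case 2
      then have "f (lie hs zs) = lie (f zs) (f hs)" using hs_sl2 zs_sl2 unfolding is_antiaut_def by blast
      then have "lie (f zs) (f hs) = msmul 2 (f zs)" using sm lie_hs by metis
      then have "trform (msmul 2 (f zs)) (f zs) = 0" using trform_lie0' by metis
      then show ?thesis by (simp add: trform_smul)
    next
      case 3
      then have "trform (f zs) (f zs) = trform zs zs" using zs_sl2 unfolding is_isom_def by blast
      then show ?thesis by (simp add: zs_def trform_def)
    qed
  qed
  have "f zs \<in> Lstar" using L zs_Lstar by blast
  then obtain p q r where pqr: "f zs = imat p q r" using Lstar_iff by blast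
  have "(of_int (2*(p^2 + q*r)) :: 'a) = 0" using tr pqr trform_imat by metis
  then have eq: "p^2 + q*r = 0" by (metis mult_eq_0_iff of_int_eq_0_iff zero_neq_numeral)
  obtain a c where ac: "coprime a c"
    "(p = a*c \<and> q = -(a^2) \<and> r = c^2) \<or> (p = -(a*c) \<and> q = a^2 \<and> r = -(c^2))"
    using NT[OF eq prim[OF lb L pqr]] by blast
  from ac(2) show ?thesis
  proof (elim disjE conjE)
    assume "p = a*c" "q = -(a^2)" "r = c^2"
    then have "f zs = nmat a c" using pqr by (simp add: imat_def nmat_def)
    then show ?thesis using Nset_I[OF ac(1), where 'a='a] by simp
  next
    assume "p = -(a*c)" "q = a^2" "r = -(c^2)"
    then have "f zs = - nmat a c" using pqr by (simp add: imat_def nmat_def)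
    then show ?thesis using Nset_I[OF ac(1), where 'a='a] by blast
  qed
qed


definition cj :: "'a::field_char_0 \<Rightarrow> 'a \<Rightarrow> 'a \<Rightarrow> 'a \<Rightarrow> 'a m2 \<Rightarrow> 'a m2" where
  "cj A B C D v = msmul (A*D - B*C) (mk2 A B C D ** v ** mk2 D (-B) (-C) A)"

lemma cj_inv_mk2:
  assumes "(A*D - B*C)^2 = (1::'a::field_char_0)"
  shows "cj D (-B) (-C) A (cj A B C D (mk2 p q r s)) = mk2 p q r s"
  using assms unfolding cj_def
  apply (simp add: power2_eq_square)
  apply (intro conjI)
  by algebra+


lemma cj_inv:
  assumes "(A*D - B*C)^2 = (1::'a::field_char_0)"
  shows "cj D (-B) (-C) A (cj A B C D v) = v"
  using cj_inv_mk2[OF assms] by (metis m2_cases)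

lemma cj_sl2_mk2: "cj A B C D (mk2 p q r (-p)) \<in> sl2"
  unfolding sl2_def cj_def by simp algebra

lemma cj_sl2: "v \<in> sl2 \<Longrightarrow> cj A B C D v \<in> sl2"
  using cj_sl2_mk2 unfolding sl2_mk2 by blast

lemma cj_add: "cj A B C D (u + v) = cj A B C D u + cj A B C D v"
proof -
  have "cj A B C D (mk2 a b c d + mk2 e f g h) = cj A B C D (mk2 a b c d) + cj A B C D (mk2 e f g h)"
    for a b c d e f g h by (simp add: cj_def algebra_simps)
  then show ?thesis by (metis m2_cases)
qed

lemma cj_smul: "cj A B C D (msmul k u) = msmul k (cj A B C D u)"
proof -
  have "cj A B C D (msmul k (mk2 a b c d)) = msmul k (cj A B C D (mk2 a b c d))"
    for a b c d by (simp add: cj_def algebra_simps)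
  then show ?thesis by (metis m2_cases)
qed

lemma cj_lie:
  assumes "(A*D - B*C)^2 = (1::'a::field_char_0)"
  shows "cj A B C D (lie u v) = lie (cj A B C D u) (cj A B C D v)"
proof -
  have "cj A B C D (lie (mk2 a b c d) (mk2 e f g h)) = lie (cj A B C D (mk2 a b c d)) (cj A B C D (mk2 e f g h))"
    for a b c d e f g h
    using assms unfolding cj_def lie_def
    apply (simp add: power2_eq_square)
    apply (intro conjI)
    by algebra+
  then show ?thesis by (metis m2_cases)
qed

lemma cj_tr:
  assumes "(A*D - B*C)^2 = (1::'a::field_char_0)"
  shows "trform (cj A B C D u) (cj A B C D v) = trform u v"
proof -
  have "trform (cj A B C D (mk2 a b c d)) (cj A B C D (mk2 e f g h)) = trform (mk2 a b c d) (mk2 e f g h)"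
    for a b c d e f g h
    using assms unfolding cj_def trform_def
    apply (simp add: power2_eq_square)
    by algebra
  then show ?thesis by (metis m2_cases)
qed


lemma Lstar_iff2: "u \<in> Lstar \<longleftrightarrow> u \<in> sl2 \<and> u$1$1 \<in> \<int> \<and> u$1$2 \<in> \<int> \<and> u$2$1 \<in> \<int>"
proof
  assume "u \<in> Lstar"
  then obtain p q r where "u = imat p q r" using Lstar_iff by blast
  then show "u \<in> sl2 \<and> u$1$1 \<in> \<int> \<and> u$1$2 \<in> \<int> \<and> u$2$1 \<in> \<int>"
    by (simp add: imat_def sl2_def)
next
  assume h: "u \<in> sl2 \<and> u$1$1 \<in> \<int> \<and> u$1$2 \<in> \<int> \<and> u$2$1 \<in> \<int>"
  then obtain p q r where "u$1$1 = of_int p" "u$1$2 = of_int q" "u$2$1 = of_int r"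
    by (meson Ints_cases)
  moreover have "u$2$2 = - u$1$1" using h by (simp add: sl2_def mtr_def eq_neg_iff_add_eq_0 add.commute)
  ultimately have "u = imat p q r" by (simp add: imat_def m2_eq_iff)
  then show "u \<in> Lstar" using Lstar_iff by blast
qed

lemma cj_Lstar:
  assumes "A \<in> \<int>" "B \<in> \<int>" "C \<in> \<int>" "D \<in> \<int>" "u \<in> Lstar"
  shows "cj A B C D u \<in> Lstar"
proof -
  obtain p q r where u: "u = imat p q r" using assms(5) Lstar_iff by blast
  have "cj A B C D u \<in> sl2" using cj_sl2 assms(5) Lstar_sl2 by blast
  moreover have "(cj A B C D u)$1$1 \<in> \<int> \<and> (cj A B C D u)$1$2 \<in> \<int> \<and> (cj A B C D u)$2$1 \<in> \<int>"
    using assms(1-4) unfolding u imat_def cj_def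
    by (simp add: Ints_add Ints_mult Ints_diff Ints_minus)
  ultimately show ?thesis using Lstar_iff2 by blast
qed

lemma cj_good:
  assumes d: "(A*D - B*C)^2 = (1::'a::field_char_0)" and I: "A \<in> \<int>" "B \<in> \<int>" "C \<in> \<int>" "D \<in> \<int>"
  shows "cj A B C D \<in> AutZ \<inter> IsomZ"
proof -
  have d': "(D*A - (-B)*(-C))^2 = (1::'a)" using d by (simp add: mult.commute)
  have lb: "lin_bij (cj A B C D)"
    unfolding lin_bij_def
  proof (intro conjI ballI allI)
    show "bij_betw (cj A B C D) sl2 sl2"
    proof (rule bij_betwI[where g="cj D (-B) (-C) A"])
      show "cj A B C D \<in> sl2 \<rightarrow> sl2" using cj_sl2 by blast
      show "cj D (-B) (-C) A \<in> sl2 \<rightarrow> sl2" using cj_sl2 by blast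
      show "cj D (-B) (-C) A (cj A B C D x) = x" for x using cj_inv[OF d] .
      show "cj A B C D (cj D (- B) (- C) A y) = y" for y using cj_inv[OF d'] by simp
    qed
  qed (simp_all add: cj_add cj_smul)
  have L: "cj A B C D ` Lstar = Lstar"
  proof
    show "cj A B C D ` Lstar \<subseteq> Lstar" using cj_Lstar[OF I] by blast
    show "Lstar \<subseteq> cj A B C D ` Lstar"
    proof
      fix y :: "'a m2" assume y: "y \<in> Lstar"
      have "cj A B C D (cj D (- B) (- C) A y) = y" using cj_inv[OF d'] by simp
      moreover have "cj D (- B) (- C) A y \<in> Lstar" using cj_Lstar[OF I(4) _ _ I(1) y] I by simp
      ultimately show "y \<in> cj A B C D ` Lstar" by (metis image_eqI)
    qed
  qed
  have "is_aut (cj A B C D)" unfolding is_aut_def using lb cj_lie[OF d] by blast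
  moreover have "is_isom (cj A B C D)" unfolding is_isom_def using lb cj_tr[OF d] by blast
  ultimately show ?thesis using L unfolding AutZ_def IsomZ_def by blast
qed

lemma cj_zs: "cj A B C D zs = msmul (A*D - B*C) (mk2 (A*C) (-(A^2)) (C^2) (-(A*C)))"
  by (simp add: cj_def zs_def power2_eq_square algebra_simps)

lemma N_in_orbits:
  assumes "u \<in> Nset \<union> uminus ` (Nset :: 'a::field_char_0 m2 set)"
  shows "u \<in> orbit AutZ zs \<and> u \<in> orbit IsomZ zs"
proof -
  obtain a c where ac: "coprime a c" "u = nmat a c \<or> u = - nmat a c"
    using assms unfolding Nset_def by blast
  obtain s t where st: "s * a + t * c = 1" using ac(1) coprime_bez by blast
  show ?thesis
    using ac(2)
  proof
    assume u: "u = nmat a c"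
    let ?f = "cj (of_int a) (of_int (-t)) (of_int c) (of_int s) :: 'a m2 \<Rightarrow> 'a m2"
    have "of_int a * of_int s - of_int (-t) * of_int c = (of_int (s*a + t*c) :: 'a)" by (simp add: algebra_simps)
    then have det: "of_int a * of_int s - of_int (-t) * of_int c = (1::'a)" using st by simp
    have "?f \<in> AutZ \<inter> IsomZ" by (rule cj_good, subst det) simp_all
    moreover have "?f zs = u" unfolding cj_zs det u by (simp add: nmat_def)
    ultimately show ?thesis unfolding orbit_def by (metis IntD1 IntD2 image_eqI)
  next
    assume u: "u = - nmat a c"
    let ?f = "cj (of_int a) (of_int t) (of_int c) (of_int (-s)) :: 'a m2 \<Rightarrow> 'a m2"
    have "of_int a * of_int (-s) - of_int t * of_int c = (- of_int (s*a + t*c) :: 'a)" by (simp add: algebra_simps)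
    then have det: "of_int a * of_int (-s) - of_int t * of_int c = (-1::'a)" using st by simp
    have "?f \<in> AutZ \<inter> IsomZ" by (rule cj_good, subst det) simp_all
    moreover have "?f zs = u" unfolding cj_zs det u by (simp add: nmat_def)
    ultimately show ?thesis unfolding orbit_def by (metis IntD1 IntD2 image_eqI)
  qed
qed


lemma OG_eq: "orbit (Ggrp :: ('a::field_char_0 m2 \<Rightarrow> 'a m2) set) zs = Nset"
proof
  show "orbit (Ggrp :: ('a m2 \<Rightarrow> 'a m2) set) zs \<subseteq> Nset"
    unfolding orbit_def using G_in_N by blast
  show "Nset \<subseteq> orbit (Ggrp :: ('a m2 \<Rightarrow> 'a m2) set) zs"
    unfolding Nset_def using N_in_G by blast
qed

lemma N_disj: "(Nset :: 'a::field_char_0 m2 set) \<inter> uminus ` Nset = {}"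
proof (rule ccontr)
  assume "Nset \<inter> uminus ` Nset \<noteq> ({} :: 'a m2 set)"
  then obtain a c a' c' where h: "coprime a c" "coprime a' c'" "(nmat a c :: 'a m2) = - nmat a' c'"
    unfolding Nset_def by blast
  then have "(of_int (-(a^2)) :: 'a) = of_int (a'^2)" "(of_int (c^2) :: 'a) = of_int (-(c'^2))"
    by (simp_all add: nmat_def)
  then have "-(a^2) = a'^2" "c^2 = -(c'^2)" by (metis of_int_eq_iff)+
  then have "a = 0" "c = 0"
    by (smt (verit) zero_le_power2 power2_less_eq_zero_iff)+
  then show False using h(1) by simp
qed

theorem theorem6p10:
  shows "orbit (Ggrp :: ('a::field_char_0 m2 \<Rightarrow> 'a m2) set) zs \<inter> uminus ` orbit Ggrp zs = {}
    \<and> orbit Ggrp zs \<union> uminus ` orbit Ggrp zs = orbit AutZ (zs :: 'a m2)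
    \<and> orbit AutZ (zs :: 'a m2) = orbit AAutZ zs
    \<and> orbit AAutZ (zs :: 'a m2) = orbit IsomZ zs"
proof -
  let ?P = "Nset \<union> uminus ` (Nset :: 'a m2 set)"
  have sub: "orbit H zs \<subseteq> ?P" if "H \<subseteq> AutZ \<union> AAutZ \<union> IsomZ" for H
    unfolding orbit_def using orbit_sub that by blast
  have AutZ: "orbit AutZ zs = ?P"
    using sub[of AutZ] N_in_orbits by blast
  have IsomZ: "orbit IsomZ zs = ?P"
    using sub[of IsomZ] N_in_orbits by blast
  have "AutZ \<subseteq> (AAutZ :: ('a m2 \<Rightarrow> 'a m2) set)" unfolding AutZ_def AAutZ_def by blast
  then have "orbit AutZ zs \<subseteq> orbit AAutZ (zs :: 'a m2)" unfolding orbit_def by blast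
  then have AAutZ: "orbit AAutZ zs = ?P"
    using sub[of AAutZ] AutZ by blast
  show ?thesis unfolding OG_eq AutZ AAutZ IsomZ using N_disj by simp
qed

end
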